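(* Let $W\in\mathbb{D}_n$ be a Dale matrix satisfying the Ground Assumption, and let $\sigma\subset\mathcal{E}$ be nonempty. Then $\sigma\in\mathcal{C}(W)$ if and only if both (i) $\rho(W_{\mathcal{E_U}\cap\sigma})<1$ (spectral condition; with the convention that the spectral radius of the empty matrix is $0$) and (ii) $\sigma\in\mathrm{code}(G_{\mathcal{E}},\mathcal{E_U})$, i.e. $N^+_{G_\mathcal{E}}(\sigma)\cap\mathcal{E_U}\subset\sigma$ (graph condition).
   Context: Threshold-linear network: $\dot x_i=-x_i+[\sum_j W_{ij}x_j+b_i]_+$ with $[y]_+=\max(0,y)$; a fixed point is $x^*$ with $x^*=[Wx^*+b]_+$. A Dale matrix $W\in\mathbb{D}_n$ is an $n\times n$ real matrix with a partition $[n]=\mathcal{E}\sqcup\mathcal{I}$ such that $W_{ii}=0$, $W_{ji}\ge 0$ for all $j$ if $i\in\mathcal{E}$, and $W_{ji}\le0$ for all $j$ if $i\in\mathcal{I}$. Ground Assumption: $(I-W)_\sigma$ nonsingular for every nonempty $\sigma\subset[n]$. Excitatory support: $\mathrm{supp}_+x=\{i\in\mathcal{E}:x_i>0\}$. Combinatorial code: $\mathcal{C}(W)=\{\mathrm{supp}_+x^*: b\in\mathbb{R}^n_{\ge0},\ x^*\in\mathbb{R}^n_{\ge0}\text{ a fixed point of }(W,b)\}$. The excitatory connectivity graph $G_\mathcal{E}$ is the directed graph on vertex set $\mathcal{E}$ with an arc $i\to j$ iff $i\ne j$ and $W_{ji}>0$. The uninhibited set is $\mathcal{E_U}=\{j\in\mathcal{E}: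 W_{ji}=0\ \forall i\in\mathcal{I}\}$. For a directed graph $G$ on $\mathcal{E}$ and $\sigma\subset\mathcal{E}$, the out-neighborhood is $N^+_G(\sigma)=\bigcup_{i\in\sigma}\{j\in\mathcal{E}: i\to j\}$, and for $U\subset\mathcal{E}$, $\mathrm{code}(G,U)=\{\sigma\subset\mathcal{E}: N^+_G(\sigma)\cap U\subset\sigma\}$. $W_{\tau}$ is the principal submatrix on $\tau$ and $\rho$ denotes spectral radius. *)

theory Defs
  imports "Jordan_Normal_Form.Spectral_Radius" "Jordan_Normal_Form.DL_Submatrix"
begin

definition dale_matrix :: "nat \<Rightarrow> real mat \<Rightarrow> nat set \<Rightarrow> nat set \<Rightarrow> bool" where
  "dale_matrix n W E I \<longleftrightarrow> W \<in> carrier_mat n n \<and> E \<union> I = {0..<n} \<and> E \<inter> I = {} \<and>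
     (\<forall>i<n. W $$ (i,i) = 0) \<and>
     (\<forall>i\<in>E. \<forall>j<n. W $$ (j,i) \<ge> 0) \<and>
     (\<forall>i\<in>I. \<forall>j<n. W $$ (j,i) \<le> 0)"

text \<open>Principal submatrix on index set tau (rows and columns in tau, in increasing order).\<close>
definition principal_submatrix :: "'a mat \<Rightarrow> nat set \<Rightarrow> 'a mat" where
  "principal_submatrix A \<tau> = submatrix A \<tau> \<tau>"

definition ground_assumption :: "nat \<Rightarrow> real mat \<Rightarrow> bool" where
  "ground_assumption n W \<longleftrightarrow>
     (\<forall>\<sigma>. \<sigma> \<noteq> {} \<and> \<sigma> \<subseteq> {0..<n} \<longrightarrow> det (principal_submatrix (1\<^sub>m n - W) \<sigma>) \<noteq> 0)"

definition tln_fixed_point :: "nat \<Rightarrow> real mat \<Rightarrow> real vec \<Rightarrow> real vec \<Rightarrow> bool" where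
  "tln_fixed_point n W b x \<longleftrightarrow> x \<in> carrier_vec n \<and>
     (\<forall>i<n. x $ i = max 0 (((W *\<^sub>v x) $ i) + (b $ i)))"

definition exc_support :: "nat set \<Rightarrow> real vec \<Rightarrow> nat set" where
  "exc_support E x = {i\<in>E. x $ i > 0}"

definition comb_code :: "nat \<Rightarrow> real mat \<Rightarrow> nat set \<Rightarrow> nat set set" where
  "comb_code n W E = {exc_support E x | x b.
      b \<in> carrier_vec n \<and> (\<forall>i<n. b $ i \<ge> 0) \<and>
      x \<in> carrier_vec n \<and> (\<forall>i<n. x $ i \<ge> 0) \<and> tln_fixed_point n W b x}"

definition exc_graph :: "real mat \<Rightarrow> nat set \<Rightarrow> nat \<Rightarrow> nat \<Rightarrow> bool" where
  "exc_graph W E i j \<longleftrightarrow> i \<in> E \<and> j \<in> E \<and> i \<noteq> j \<and> W $$ (j,i) > 0"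

definition uninhibited :: "real mat \<Rightarrow> nat set \<Rightarrow> nat set \<Rightarrow> nat set" where
  "uninhibited W E I = {j\<in>E. \<forall>i\<in>I. W $$ (j,i) = 0}"

definition out_nbhd :: "(nat \<Rightarrow> nat \<Rightarrow> bool) \<Rightarrow> nat set \<Rightarrow> nat set \<Rightarrow> nat set" where
  "out_nbhd G E \<sigma> = (\<Union>i\<in>\<sigma>. {j\<in>E. G i j})"

definition graph_code :: "(nat \<Rightarrow> nat \<Rightarrow> bool) \<Rightarrow> nat set \<Rightarrow> nat set \<Rightarrow> nat set set" where
  "graph_code G E U = {\<sigma>. \<sigma> \<subseteq> E \<and> out_nbhd G E \<sigma> \<inter> U \<subseteq> \<sigma>}"

definition spec_rad :: "real mat \<Rightarrow> real" where
  "spec_rad A = (if dim_row A = 0 then 0 else spectral_radius (map_mat complex_of_real A))"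

end

theory Submission
  imports Defs
begin


lemma mv_index:
  fixes A :: "'a::comm_semiring_0 mat"
  assumes "A \<in> carrier_mat m m" "v \<in> carrier_vec m" "i < m"
  shows "(A *\<^sub>v v) $ i = (\<Sum>j<m. A $$ (i,j) * v $ j)"
  using assms by (auto simp: mult_mat_vec_def scalar_prod_def lessThan_atLeast0 intro!: sum.cong)

lemma mono_fix:
  fixes s :: "nat \<Rightarrow> nat \<Rightarrow> real" and B :: "real mat"
  assumes mono: "\<And>k i. i < m \<Longrightarrow> s k i \<le> s (Suc k) i"
    and bnd: "\<And>k i. i < m \<Longrightarrow> s k i \<le> M i"
    and rec: "\<And>k i. i < m \<Longrightarrow> s (Suc k) i = a i + (\<Sum>j<m. B $$ (i,j) * s k j)"
  shows "\<exists>Lf. \<forall>i<m. Lf i = a i + (\<Sum>j<m. B $$ (i,j) * Lf j) \<and> (\<forall>k. s k i \<le> Lf i)"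
proof -
  have "\<forall>i. \<exists>l. i < m \<longrightarrow> ((\<lambda>k. s k i) \<longlonglongrightarrow> l) \<and> (\<forall>k. s k i \<le> l)"
  proof
    fix i show "\<exists>l. i < m \<longrightarrow> ((\<lambda>k. s k i) \<longlonglongrightarrow> l) \<and> (\<forall>k. s k i \<le> l)"
    proof (cases "i < m")
      case True
      have "incseq (\<lambda>k. s k i)" by (rule incseq_SucI) (use mono True in auto)
      moreover have "\<forall>k. s k i \<le> M i" using bnd True by auto
      ultimately obtain l where "(\<lambda>k. s k i) \<longlonglongrightarrow> l" "\<forall>k. s k i \<le> l"
        by (rule incseq_convergent)
      then show ?thesis by blast
    qed auto
  qed
  then obtain Lf where Lf: "\<And>i. i < m \<Longrightarrow> ((\<lambda>k. s k i) \<longlonglongrightarrow> Lf i) \<and> (\<forall>k. s k i \<le> Lf i)"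
    by metis
  show ?thesis
  proof (rule exI[of _ Lf], intro allI impI)
    fix i assume i: "i < m"
    have 1: "(\<lambda>k. s (Suc k) i) \<longlonglongrightarrow> Lf i" using Lf[OF i] LIMSEQ_Suc by blast
    have 2: "(\<lambda>k. a i + (\<Sum>j<m. B $$ (i,j) * s k j)) \<longlonglongrightarrow> a i + (\<Sum>j<m. B $$ (i,j) * Lf j)"
      by (intro tendsto_intros) (use Lf in auto)
    from 2 have "(\<lambda>k. s (Suc k) i) \<longlonglongrightarrow> a i + (\<Sum>j<m. B $$ (i,j) * Lf j)"
      using rec[OF i] by simp
    with 1 have "Lf i = a i + (\<Sum>j<m. B $$ (i,j) * Lf j)" by (rule LIMSEQ_unique)
    then show "Lf i = a i + (\<Sum>j<m. B $$ (i,j) * Lf j) \<and> (\<forall>k. s k i \<le> Lf i)" using Lf[OF i] by auto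
  qed
qed

lemma L1core:
  fixes B :: "real mat" and y :: "real vec"
  assumes B: "B \<in> carrier_mat m m"
   and nn: "\<And>i j. i<m \<Longrightarrow> j<m \<Longrightarrow> B$$(i,j) \<ge> 0"
   and y: "y \<in> carrier_vec m" "\<And>i. i<m \<Longrightarrow> y$i > 0" "\<And>i. i<m \<Longrightarrow> (B *\<^sub>v y)$i \<le> y$i"
   and nofix: "\<And>v. v \<in> carrier_vec m \<Longrightarrow> B *\<^sub>v v = v \<Longrightarrow> v = 0\<^sub>v m"
   and w: "\<And>i. i < m \<Longrightarrow> w i \<ge> 0" "i0 < m" "w i0 > 0"
   and sub: "\<And>i. i < m \<Longrightarrow> w i \<le> (\<Sum>j<m. B$$(i,j) * w j)"
  shows False
proof -
  define f where "f = (\<lambda>(z::nat \<Rightarrow> real) i. \<Sum>j<m. B$$(i,j) * z j)"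
  define s where "s k = (f ^^ k) w" for k
  have sS: "s (Suc k) i = 0 + (\<Sum>j<m. B$$(i,j) * s k j)" for k i
    by (simp add: s_def f_def)
  have s0: "s 0 = w" by (simp add: s_def)
  have mono: "\<forall>i<m. s k i \<le> s (Suc k) i" for k
  proof (induction k)
    case 0 then show ?case using sub by (simp add: sS s0)
  next
    case (Suc k)
    show ?case
    proof (intro allI impI)
      fix i assume i: "i < m"
      have "(\<Sum>j<m. B$$(i,j) * s k j) \<le> (\<Sum>j<m. B$$(i,j) * s (Suc k) j)"
        by (intro sum_mono mult_left_mono) (use Suc nn i in auto)
      then show "s (Suc k) i \<le> s (Suc (Suc k)) i" by (simp add: sS)
    qed
  qed
  define c where "c = (\<Sum>i<m. w i / y$i)"
  have wc: "w i \<le> c * y$i" if i: "i < m" for i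
  proof -
    have "w i / y$i \<le> c" unfolding c_def
      by (rule member_le_sum) (use i w y in \<open>auto intro: divide_nonneg_pos\<close>)
    then show ?thesis using y(2)[OF i] by (simp add: divide_le_eq)
  qed
  have bnd: "\<forall>i<m. s k i \<le> c * y$i" for k
  proof (induction k)
    case 0 then show ?case using wc by (simp add: s0)
  next
    case (Suc k)
    show ?case
    proof (intro allI impI)
      fix i assume i: "i < m"
      have "(\<Sum>j<m. B$$(i,j) * s k j) \<le> (\<Sum>j<m. B$$(i,j) * (c * y$j))"
        by (intro sum_mono mult_left_mono) (use Suc nn i in auto)
      also have "\<dots> = c * (B *\<^sub>v y)$i"
        using mv_index[OF B y(1) i] by (simp add: sum_distrib_left mult_ac)
      also have "\<dots> \<le> c * y$i"
      proof -
        have "c \<ge> 0" unfolding c_def by (intro sum_nonneg) (use w y in \<open>auto intro: divide_nonneg_pos\<close>)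
        then show ?thesis using y(3)[OF i] by (simp add: mult_left_mono)
      qed
      finally show "s (Suc k) i \<le> c * y$i" by (simp add: sS)
    qed
  qed
  have "\<exists>Lf. \<forall>i<m. Lf i = 0 + (\<Sum>j<m. B $$ (i,j) * Lf j) \<and> (\<forall>k. s k i \<le> Lf i)"
  proof (rule mono_fix[where M="\<lambda>i. c * y$i"])
    show "\<And>k i. i < m \<Longrightarrow> s k i \<le> s (Suc k) i" using mono by blast
    show "\<And>k i. i < m \<Longrightarrow> s k i \<le> c * y$i" using bnd by blast
    show "\<And>k i. i < m \<Longrightarrow> s (Suc k) i = 0 + (\<Sum>j<m. B $$ (i,j) * s k j)" by (rule sS)
  qed
  then obtain Lf where Lf: "\<forall>i<m. Lf i = 0 + (\<Sum>j<m. B $$ (i,j) * Lf j) \<and> (\<forall>k. s k i \<le> Lf i)"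
    by blast
  define V where "V = vec m Lf"
  have Lfe: "(\<Sum>j<m. B $$ (i,j) * Lf j) = Lf i" if "i < m" for i
  proof -
    from Lf that have "Lf i = 0 + (\<Sum>j<m. B $$ (i,j) * Lf j)" by blast
    then show ?thesis by linarith
  qed
  have "B *\<^sub>v V = V"
  proof (rule eq_vecI)
    fix i assume "i < dim_vec V"
    then have i: "i < m" by (simp add: V_def)
    have "(B *\<^sub>v V) $ i = (\<Sum>j<m. B $$ (i,j) * V $ j)"
      by (rule mv_index[OF B _ i]) (simp add: V_def)
    also have "\<dots> = (\<Sum>j<m. B $$ (i,j) * Lf j)" by (intro sum.cong) (auto simp: V_def)
    finally show "(B *\<^sub>v V) $ i = V $ i" using Lfe[OF i] i by (simp add: V_def)
  qed (use B in \<open>simp add: V_def\<close>)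
  then have "V = 0\<^sub>v m" using nofix V_def by auto
  then have "Lf i0 = 0" using w(2) unfolding V_def by (metis index_vec index_zero_vec(1))
  moreover have "s 0 i0 \<le> Lf i0" using Lf w(2) by blast
  ultimately show False using w(3) s0 by auto
qed

lemma L1:
  fixes B :: "real mat" and y :: "real vec"
  assumes B: "B \<in> carrier_mat m m"
   and nn: "\<And>i j. i<m \<Longrightarrow> j<m \<Longrightarrow> B$$(i,j) \<ge> 0"
   and y: "y \<in> carrier_vec m" "\<And>i. i<m \<Longrightarrow> y$i > 0" "\<And>i. i<m \<Longrightarrow> (B *\<^sub>v y)$i \<le> y$i"
   and nofix: "\<And>v. v \<in> carrier_vec m \<Longrightarrow> B *\<^sub>v v = v \<Longrightarrow> v = 0\<^sub>v m"
  shows "spec_rad B < 1"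
proof (cases "m = 0")
  case True then show ?thesis using B by (simp add: spec_rad_def)
next
  case False
  let ?Bc = "map_mat complex_of_real B"
  have Bc: "?Bc \<in> carrier_mat m m" using B by simp
  have sr: "spec_rad B = spectral_radius ?Bc" using B False by (simp add: spec_rad_def)
  from spectral_radius_mem_max(1)[OF Bc] False obtain ev where
    ev: "eigenvalue ?Bc ev" and sre: "spectral_radius ?Bc = cmod ev"
    by (auto simp: spectrum_def)
  then obtain v where v: "v \<in> carrier_vec m" "v \<noteq> 0\<^sub>v m" "?Bc *\<^sub>v v = ev \<cdot>\<^sub>v v"
    using B unfolding eigenvalue_def eigenvector_def by auto
  show ?thesis
  proof (rule ccontr)
    assume "\<not> spec_rad B < 1"
    then have ev1: "cmod ev \<ge> 1" using sr sre by simp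
    define w where "w i = cmod (v $ i)" for i
    obtain i0 where i0: "i0 < m" "v $ i0 \<noteq> 0"
      using v(1,2) by (metis eq_vecI carrier_vecD index_zero_vec(1,2))
    show False
    proof (rule L1core[OF B nn y nofix])
      show "\<And>i. i < m \<Longrightarrow> 0 \<le> w i" by (simp add: w_def)
      show "i0 < m" by fact
      show "0 < w i0" using i0 by (simp add: w_def)
      fix i assume i: "i < m"
      have "w i \<le> cmod ev * w i" using ev1 by (simp add: w_def mult_le_cancel_right1)
      also have "\<dots> = cmod ((ev \<cdot>\<^sub>v v) $ i)" using v(1) i by (simp add: w_def norm_mult)
      also have "\<dots> = cmod ((?Bc *\<^sub>v v) $ i)" using v(3) by simp
      also have "\<dots> = cmod (\<Sum>j<m. ?Bc $$ (i,j) * v $ j)" using mv_index[OF Bc v(1) i] by simp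
      also have "\<dots> \<le> (\<Sum>j<m. cmod (?Bc $$ (i,j) * v $ j))" by (rule norm_sum)
      also have "\<dots> = (\<Sum>j<m. B $$ (i,j) * w j)"
        using B i nn by (intro sum.cong) (auto simp: w_def norm_mult)
      finally show "w i \<le> (\<Sum>j<m. B $$ (i,j) * w j)" .
    qed
  qed
qed

lemma pow_mat_Suc_left:
  fixes B :: "'a::semiring_1 mat"
  assumes B: "B \<in> carrier_mat m m"
  shows "B ^\<^sub>m Suc k = B * B ^\<^sub>m k"
proof (induction k)
  case 0 then show ?case using B by simp
next
  case (Suc k)
  have "B ^\<^sub>m Suc (Suc k) = B ^\<^sub>m Suc k * B" by simp
  also have "\<dots> = (B * B ^\<^sub>m k) * B" using Suc by simp
  also have "\<dots> = B * (B ^\<^sub>m k * B)" by (rule assoc_mult_mat) (use B in auto)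
  finally show ?case by simp
qed

lemma L2:
  fixes B :: "real mat"
  assumes B: "B \<in> carrier_mat m m"
   and nn: "\<And>i j. i<m \<Longrightarrow> j<m \<Longrightarrow> B$$(i,j) \<ge> 0"
   and sr: "spec_rad B < 1"
   and dt: "m > 0 \<Longrightarrow> det (1\<^sub>m m - B) \<noteq> 0"
   and a: "\<And>i. i < m \<Longrightarrow> a i > 0"
  shows "\<exists>Lf. \<forall>i<m. Lf i > 0 \<and> Lf i = a i + (\<Sum>j<m. B $$ (i,j) * Lf j)"
proof (cases "m = 0")
  case True then show ?thesis by simp
next
  case False
  let ?Bc = "map_mat complex_of_real B"
  have Bc: "?Bc \<in> carrier_mat m m" using B by simp
  have "spectral_radius ?Bc < 1" using sr B False by (simp add: spec_rad_def)
  from spectral_radius_jnf_norm_bound_less_1_upper_triangular[OF Bc this]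
  obtain c where c: "\<And>k. norm_bound (?Bc ^\<^sub>m k) c" by auto
  have pb: "\<bar>(B ^\<^sub>m k) $$ (i,j)\<bar> \<le> c" if "i < m" "j < m" for i j k
  proof -
    have "?Bc ^\<^sub>m k = map_mat complex_of_real (B ^\<^sub>m k)"
      by (rule of_real_hom.mat_hom_pow[OF B, symmetric])
    note eq = this
    have d: "dim_row (?Bc ^\<^sub>m k) = m" "dim_col (?Bc ^\<^sub>m k) = m"
      using pow_mat_dim_square[OF Bc] by auto
    have X: "norm ((?Bc ^\<^sub>m k) $$ (i,j)) \<le> c"
      using c[of k] that unfolding norm_bound_def d by blast
    have Y: "(?Bc ^\<^sub>m k) $$ (i,j) = complex_of_real ((B ^\<^sub>m k) $$ (i,j))"
      unfolding eq by (rule index_map_mat(1)) (use that pow_mat_dim_square[OF B, of k] in auto)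
    have "norm (complex_of_real ((B ^\<^sub>m k) $$ (i,j))) \<le> c" using X unfolding Y .
    then show ?thesis by (simp only: norm_of_real)
  qed
  have IB: "1\<^sub>m m - B \<in> carrier_mat m m" using B by (intro minus_carrier_mat) auto
  have U: "1\<^sub>m m - B \<in> Units (ring_mat TYPE(real) m ())"
    by (rule det_non_zero_imp_unit[OF IB dt]) (use False in auto)
  obtain C where C0: "C \<in> carrier (ring_mat TYPE(real) m ())"
     "(1\<^sub>m m - B) \<otimes>\<^bsub>ring_mat TYPE(real) m ()\<^esub> C = \<one>\<^bsub>ring_mat TYPE(real) m ()\<^esub>"
    using U unfolding Units_def by blast
  have C: "C \<in> carrier_mat m m" "(1\<^sub>m m - B) * C = 1\<^sub>m m"
    using C0 by (simp_all add: ring_mat_def)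
  define av where "av = vec m a"
  define y where "y = C *\<^sub>v av"
  have y: "y \<in> carrier_vec m" using C by (simp add: y_def av_def)
  have "(1\<^sub>m m - B) *\<^sub>v y = av"
  proof -
    have av: "av \<in> carrier_vec m" by (simp add: av_def)
    have "(1\<^sub>m m - B) *\<^sub>v y = ((1\<^sub>m m - B) * C) *\<^sub>v av"
      unfolding y_def by (rule assoc_mult_mat_vec[symmetric, OF IB C(1) av])
    also have "\<dots> = av" using C(2) av by simp
    finally show ?thesis .
  qed
  moreover have "(1\<^sub>m m - B) *\<^sub>v y = 1\<^sub>m m *\<^sub>v y - B *\<^sub>v y"
    by (rule minus_mult_distrib_mat_vec[OF one_carrier_mat B y])
  ultimately have "y - B *\<^sub>v y = av" using y by simp
  then have ye: "y $ i = a i + (B *\<^sub>v y) $ i" if "i < m" for i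
  proof -
    have "(y - B *\<^sub>v y) $ i = av $ i" using \<open>y - B *\<^sub>v y = av\<close> by simp
    moreover have "(y - B *\<^sub>v y) $ i = y $ i - (B *\<^sub>v y) $ i" using that B by simp
    moreover have "av $ i = a i" using that by (simp add: av_def)
    ultimately show ?thesis by linarith
  qed
  define f where "f = (\<lambda>(z::nat \<Rightarrow> real) i. a i + (\<Sum>j<m. B$$(i,j) * z j))"
  define S where "S k = (f ^^ k) (\<lambda>_. 0)" for k
  have SS: "S (Suc k) i = a i + (\<Sum>j<m. B$$(i,j) * S k j)" for k i
    by (simp add: S_def f_def)
  have S0: "S 0 i = 0" for i by (simp add: S_def)
  define T where "T k = B ^\<^sub>m k *\<^sub>v y" for k
  have T: "T k \<in> carrier_vec m" for k unfolding T_def by (rule mult_mat_vec_carrier[OF pow_carrier_mat[OF B] y])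
  have TS: "T (Suc k) = B *\<^sub>v T k" for k
  proof -
    have "T (Suc k) = (B * B ^\<^sub>m k) *\<^sub>v y" unfolding T_def by (subst pow_mat_Suc_left[OF B]) (rule refl)
    also have "\<dots> = B *\<^sub>v (B ^\<^sub>m k *\<^sub>v y)" by (rule assoc_mult_mat_vec[OF B pow_carrier_mat[OF B] y])
    finally show ?thesis unfolding T_def .
  qed
  have ST: "\<forall>i<m. S k i = y $ i - T k $ i" for k
  proof (induction k)
    case 0 then show ?case using B y by (simp add: S0 T_def)
  next
    case (Suc k)
    show ?case
    proof (intro allI impI)
      fix i assume i: "i < m"
      have "S (Suc k) i = a i + (\<Sum>j<m. B$$(i,j) * (y $ j - T k $ j))"
        unfolding SS using Suc by (intro arg_cong[where f="\<lambda>x. a i + x"] sum.cong) auto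
      also have "\<dots> = a i + (B *\<^sub>v y) $ i - (B *\<^sub>v T k) $ i"
        using mv_index[OF B y i] mv_index[OF B T i]
        by (simp add: right_diff_distrib sum_subtractf)
      also have "\<dots> = y $ i - T (Suc k) $ i" using ye[OF i] arg_cong[OF TS[of k], of "\<lambda>v. v $ i"] by linarith
      finally show "S (Suc k) i = y $ i - T (Suc k) $ i" .
    qed
  qed
  define D where "D = (\<Sum>j<m. c * \<bar>y $ j\<bar>)"
  have Tb: "\<bar>T k $ i\<bar> \<le> D" if i: "i < m" for k i
  proof -
    have "\<bar>T k $ i\<bar> = \<bar>\<Sum>j<m. (B ^\<^sub>m k) $$ (i,j) * y $ j\<bar>"
      unfolding T_def using mv_index[OF pow_carrier_mat[OF B] y i] by simp
    also have "\<dots> \<le> (\<Sum>j<m. \<bar>(B ^\<^sub>m k) $$ (i,j) * y $ j\<bar>)" by (rule sum_abs)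
    also have "\<dots> \<le> D" unfolding D_def
      by (intro sum_mono) (use pb i in \<open>auto simp: abs_mult intro: mult_right_mono\<close>)
    finally show ?thesis .
  qed
  have mono: "\<forall>i<m. S k i \<le> S (Suc k) i" for k
  proof (induction k)
    case 0 then show ?case using a by (simp add: SS S0 less_imp_le)
  next
    case (Suc k)
    show ?case
    proof (intro allI impI)
      fix i assume i: "i < m"
      have "(\<Sum>j<m. B$$(i,j) * S k j) \<le> (\<Sum>j<m. B$$(i,j) * S (Suc k) j)"
        by (intro sum_mono mult_left_mono) (use Suc nn i in auto)
      then show "S (Suc k) i \<le> S (Suc (Suc k)) i" by (simp add: SS)
    qed
  qed
  have "\<exists>Lf. \<forall>i<m. Lf i = a i + (\<Sum>j<m. B $$ (i,j) * Lf j) \<and> (\<forall>k. S k i \<le> Lf i)"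
  proof (rule mono_fix[where M="\<lambda>i. \<bar>y $ i\<bar> + D"])
    show "\<And>k i. i < m \<Longrightarrow> S k i \<le> S (Suc k) i" using mono by blast
    show "\<And>k i. i < m \<Longrightarrow> S k i \<le> \<bar>y $ i\<bar> + D"
    proof -
      fix k i assume i: "i < m"
      show "S k i \<le> \<bar>y $ i\<bar> + D" using ST i Tb[OF i, of k] by auto
    qed
    show "\<And>k i. i < m \<Longrightarrow> S (Suc k) i = a i + (\<Sum>j<m. B $$ (i,j) * S k j)" by (rule SS)
  qed
  then obtain Lf where Lf: "\<forall>i<m. Lf i = a i + (\<Sum>j<m. B $$ (i,j) * Lf j) \<and> (\<forall>k. S k i \<le> Lf i)"
    by blast
  show ?thesis
  proof (rule exI[of _ Lf], intro allI impI conjI)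
    fix i assume i: "i < m"
    have "S 1 i \<le> Lf i" using Lf i by blast
    moreover have "S 1 i = a i" by (simp add: SS[of 0, simplified] S0)
    ultimately show "Lf i > 0" using a[OF i] by linarith
  next
    fix i assume i: "i < m"
    show "Lf i = a i + (\<Sum>j<m. B $$ (i,j) * Lf j)" using Lf i by blast
  qed
qed




lemma idx_lt:
  fixes \<tau> :: "nat set"
  assumes "finite \<tau>" "k \<in> \<tau>"
  shows "card {z\<in>\<tau>. z < k} < card \<tau>"
proof -
  have "k \<notin> {z\<in>\<tau>. z < k}" by simp
  then have "{z\<in>\<tau>. z < k} \<subset> \<tau>" using assms by blast
  then show ?thesis by (rule psubset_card_mono[OF assms(1)])
qed

lemma pick_bij:
  fixes \<tau> :: "nat set"
  assumes "finite \<tau>"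
  shows "bij_betw (pick \<tau>) {..<card \<tau>} \<tau>"
proof (rule bij_betw_imageI)
  show "inj_on (pick \<tau>) {..<card \<tau>}"
  proof (rule inj_onI)
    fix a b assume ab: "a \<in> {..<card \<tau>}" "b \<in> {..<card \<tau>}" "pick \<tau> a = pick \<tau> b"
    have 1: "pick \<tau> a < pick \<tau> b" if "a < b"
      by (rule pick_mono[where n=b and m=a and S=\<tau>]) (use ab that in simp_all)
    have 2: "pick \<tau> b < pick \<tau> a" if "b < a"
      by (rule pick_mono[where n=a and m=b and S=\<tau>]) (use ab that in simp_all)
    show "a = b" using 1 2 ab(3) by (metis linorder_neqE_nat less_irrefl)
  qed
  show "pick \<tau> ` {..<card \<tau>} = \<tau>"
  proof
    show "pick \<tau> ` {..<card \<tau>} \<subseteq> \<tau>"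
    proof
      fix x assume "x \<in> pick \<tau> ` {..<card \<tau>}"
      then obtain a where "a < card \<tau>" "x = pick \<tau> a" by auto
      then show "x \<in> \<tau>" using pick_in_set[where n=a and S=\<tau>] by simp
    qed
    show "\<tau> \<subseteq> pick \<tau> ` {..<card \<tau>}"
    proof
      fix k assume k: "k \<in> \<tau>"
      have "card {z\<in>\<tau>. z < k} \<in> {..<card \<tau>}" using idx_lt[OF assms k] by simp
      moreover have "k = pick \<tau> (card {z\<in>\<tau>. z < k})" using pick_card_in_set[OF k] by simp
      ultimately show "k \<in> pick \<tau> ` {..<card \<tau>}" by (rule rev_image_eqI)
    qed
  qed
qed

lemma sum_pick:
  fixes \<tau> :: "nat set"
  assumes "finite \<tau>"
  shows "(\<Sum>a<card \<tau>. g (pick \<tau> a)) = (\<Sum>k\<in>\<tau>. g k)"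
  using sum.reindex_bij_betw[OF pick_bij[OF assms], of g] by simp

lemma psub_facts:
  fixes W :: "'a mat" and \<tau> :: "nat set"
  assumes W: "W \<in> carrier_mat n n" and tau: "\<tau> \<subseteq> {..<n}"
  shows "principal_submatrix W \<tau> \<in> carrier_mat (card \<tau>) (card \<tau>)"
    and "\<And>a b. a < card \<tau> \<Longrightarrow> b < card \<tau> \<Longrightarrow>
           principal_submatrix W \<tau> $$ (a,b) = W $$ (pick \<tau> a, pick \<tau> b)"
proof -
  have c: "{i. i < n \<and> i \<in> \<tau>} = \<tau>" using tau by blast
  have d: "dim_row W = n" "dim_col W = n" using W by auto
  show "principal_submatrix W \<tau> \<in> carrier_mat (card \<tau>) (card \<tau>)"
    unfolding principal_submatrix_def by (rule carrier_matI) (simp_all only: dim_submatrix d c)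
  fix a b assume "a < card \<tau>" "b < card \<tau>"
  then show "principal_submatrix W \<tau> $$ (a,b) = W $$ (pick \<tau> a, pick \<tau> b)"
    unfolding principal_submatrix_def by (intro submatrix_index) (simp_all only: d c)
qed

lemma psub_one_minus:
  fixes W :: "real mat" and \<tau> :: "nat set"
  assumes W: "W \<in> carrier_mat n n" and tau: "\<tau> \<subseteq> {..<n}"
  shows "principal_submatrix (1\<^sub>m n - W) \<tau> = 1\<^sub>m (card \<tau>) - principal_submatrix W \<tau>"
proof -
  have IW: "1\<^sub>m n - W \<in> carrier_mat n n" using W by (intro minus_carrier_mat) auto
  note P1 = psub_facts[OF IW tau] and P2 = psub_facts[OF W tau]
  have fin: "finite \<tau>" using tau finite_subset by blast
  note d1 = carrier_matD[OF P1(1)] and d2 = carrier_matD[OF P2(1)]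
  show ?thesis
  proof (rule eq_matI)
    fix a b assume "a < dim_row (1\<^sub>m (card \<tau>) - principal_submatrix W \<tau>)"
      "b < dim_col (1\<^sub>m (card \<tau>) - principal_submatrix W \<tau>)"
    then have ab: "a < card \<tau>" "b < card \<tau>" using d2 by auto
    have pa: "pick \<tau> a \<in> \<tau>" "pick \<tau> b \<in> \<tau>"
      using pick_in_set[where n=a and S=\<tau>] pick_in_set[where n=b and S=\<tau>] ab by auto
    then have pa': "pick \<tau> a < n" "pick \<tau> b < n" using tau by auto
    have inj: "pick \<tau> a = pick \<tau> b \<longleftrightarrow> a = b"
      using bij_betw_imp_inj_on[OF pick_bij[OF fin]] ab by (auto dest: inj_onD)
    have "principal_submatrix (1\<^sub>m n - W) \<tau> $$ (a, b) = (1\<^sub>m n - W) $$ (pick \<tau> a, pick \<tau> b)"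
      by (rule P1(2)[OF ab])
    also have "\<dots> = (if a = b then 1 else 0) - W $$ (pick \<tau> a, pick \<tau> b)"
      using pa' W inj by simp
    also have "\<dots> = (1\<^sub>m (card \<tau>) - principal_submatrix W \<tau>) $$ (a, b)"
      using P2(2)[OF ab] ab d2 by simp
    finally show "principal_submatrix (1\<^sub>m n - W) \<tau> $$ (a, b) = (1\<^sub>m (card \<tau>) - principal_submatrix W \<tau>) $$ (a, b)" .
  next
    show "dim_row (principal_submatrix (1\<^sub>m n - W) \<tau>) = dim_row (1\<^sub>m (card \<tau>) - principal_submatrix W \<tau>)"
      using d1 d2 by simp
    show "dim_col (principal_submatrix (1\<^sub>m n - W) \<tau>) = dim_col (1\<^sub>m (card \<tau>) - principal_submatrix W \<tau>)"
      using d1 d2 by simp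
  qed
qed



theorem mainTheorem4:
  fixes n :: nat and W :: "real mat" and E I \<sigma> :: "nat set"
  assumes "dale_matrix n W E I"
    and "ground_assumption n W"
    and "\<sigma> \<noteq> {}" and "\<sigma> \<subseteq> E"
  shows "\<sigma> \<in> comb_code n W E \<longleftrightarrow>
           spec_rad (principal_submatrix W (uninhibited W E I \<inter> \<sigma>)) < 1 \<and>
           \<sigma> \<in> graph_code (exc_graph W E) E (uninhibited W E I)"
proof -
  have W: "W \<in> carrier_mat n n" and EI: "E \<union> I = {0..<n}" "E \<inter> I = {}"
    and Ecol: "\<And>i j. i \<in> E \<Longrightarrow> j < n \<Longrightarrow> W $$ (j,i) \<ge> 0"
    and Icol: "\<And>i j. i \<in> I \<Longrightarrow> j < n \<Longrightarrow> W $$ (j,i) \<le> 0"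
    using assms(1) unfolding dale_matrix_def by auto
  have EIn: "E \<union> I = {..<n}" using EI(1) by (simp add: atLeast0LessThan)
  define U where "U = uninhibited W E I"
  have Uiff: "j \<in> U \<longleftrightarrow> j \<in> E \<and> (\<forall>i\<in>I. W $$ (j,i) = 0)" for j
    unfolding U_def uninhibited_def by blast
  define \<tau> where "\<tau> = U \<inter> \<sigma>"
  define B where "B = principal_submatrix W \<tau>"
  define m where "m = card \<tau>"
  have sigE: "\<sigma> \<subseteq> E" by fact
  have sign: "\<sigma> \<subseteq> {..<n}" using sigE EIn by blast
  have tsig: "\<tau> \<subseteq> \<sigma>" and tU: "\<tau> \<subseteq> U" unfolding \<tau>_def by auto
  have tn: "\<tau> \<subseteq> {..<n}" using tsig sign by blast
  have fin: "finite \<tau>" using tn finite_subset by blast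
  have Bc: "B \<in> carrier_mat m m" unfolding B_def m_def by (rule psub_facts(1)[OF W tn])
  have Bij: "B $$ (a,b) = W $$ (pick \<tau> a, pick \<tau> b)" if "a < m" "b < m" for a b
    unfolding B_def using psub_facts(2)[OF W tn] that m_def by blast
  have pk: "pick \<tau> a \<in> \<tau>" if "a < m" for a
    using pick_in_set[where n=a and S=\<tau>] that m_def by blast
  have pkn: "pick \<tau> a < n" if "a < m" for a using pk[OF that] tn by blast
  have pkE: "pick \<tau> a \<in> E" if "a < m" for a using pk[OF that] tsig sigE by blast
  have nnB: "B $$ (a,b) \<ge> 0" if "a < m" "b < m" for a b
    using Bij[OF that] Ecol[OF pkE[OF that(2)] pkn[OF that(1)]] by simp
  have dt: "det (1\<^sub>m m - B) \<noteq> 0" if "m > 0"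
  proof -
    have "\<tau> \<noteq> {}" using that m_def by auto
    moreover have "\<tau> \<subseteq> {0..<n}" using tn by (simp add: atLeast0LessThan)
    ultimately have "det (principal_submatrix (1\<^sub>m n - W) \<tau>) \<noteq> 0"
      using assms(2) unfolding ground_assumption_def by blast
    then show ?thesis unfolding psub_one_minus[OF W tn] B_def m_def .
  qed
  have nofix: "v = 0\<^sub>v m" if v: "v \<in> carrier_vec m" "B *\<^sub>v v = v" for v
  proof (cases "m = 0")
    case True then show ?thesis using v by (intro eq_vecI) auto
  next
    case False
    have IB: "1\<^sub>m m - B \<in> carrier_mat m m" using Bc by (intro minus_carrier_mat) auto
    have "(1\<^sub>m m - B) *\<^sub>v v = 1\<^sub>m m *\<^sub>v v - B *\<^sub>v v"
      by (rule minus_mult_distrib_mat_vec[OF one_carrier_mat Bc v(1)])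
    also have "\<dots> = 0\<^sub>v m" using v by simp
    finally have z: "(1\<^sub>m m - B) *\<^sub>v v = 0\<^sub>v m" .
    show ?thesis
    proof (rule ccontr)
      assume "v \<noteq> 0\<^sub>v m"
      then have "det (1\<^sub>m m - B) = 0"
        using det_0_iff_vec_prod_zero_field[OF IB] v(1) z by blast
      then show False using dt False by simp
    qed
  qed
  have gc: "\<sigma> \<in> graph_code (exc_graph W E) E U \<longleftrightarrow> out_nbhd (exc_graph W E) E \<sigma> \<inter> U \<subseteq> \<sigma>"
    unfolding graph_code_def using sigE by blast
  have Wxi: "(W *\<^sub>v x) $ j = (\<Sum>k<n. W $$ (j,k) * x $ k)" if "x \<in> carrier_vec n" "j < n" for x j
    by (rule mv_index[OF W that])
  show ?thesis
    unfolding U_def[symmetric] \<tau>_def[symmetric] B_def[symmetric] gc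
  proof
    assume "\<sigma> \<in> comb_code n W E"
    then obtain x b where sx: "\<sigma> = exc_support E x" and b: "b \<in> carrier_vec n" "\<forall>i<n. b$i \<ge> 0"
      and x: "x \<in> carrier_vec n" "\<forall>i<n. x$i \<ge> 0" and fp0: "tln_fixed_point n W b x"
      unfolding comb_code_def by blast
    have fp: "x $ i = max 0 ((W *\<^sub>v x) $ i + b $ i)" if "i < n" for i
      using fp0 that unfolding tln_fixed_point_def by blast
    have sig: "i \<in> \<sigma> \<longleftrightarrow> i \<in> E \<and> x $ i > 0" for i
      unfolding sx exc_support_def by blast
    have termnn: "W $$ (j,k) * x $ k \<ge> 0" if "j \<in> U" "j < n" "k < n" for j k
    proof -
      have "k \<in> E \<or> k \<in> I" using that(3) EIn by blast
      then show ?thesis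
      proof
        assume "k \<in> E" then show ?thesis using Ecol[OF _ that(2)] x(2) that(3) by simp
      next
        assume "k \<in> I" then have "W $$ (j,k) = 0" using that(1) Uiff by blast
        then show ?thesis by simp
      qed
    qed
    have "out_nbhd (exc_graph W E) E \<sigma> \<inter> U \<subseteq> \<sigma>"
    proof
      fix j assume "j \<in> out_nbhd (exc_graph W E) E \<sigma> \<inter> U"
      then obtain i where i: "i \<in> \<sigma>" "exc_graph W E i j" and jU: "j \<in> U"
        unfolding out_nbhd_def by blast
      have jE: "j \<in> E" and Wji: "W $$ (j,i) > 0" using i(2) unfolding exc_graph_def by auto
      have jn: "j < n" and in': "i < n" using jE EIn i(1) sign by auto
      show "j \<in> \<sigma>"
      proof (rule ccontr)
        assume "j \<notin> \<sigma>"
        then have "x $ j = 0" using sig jE x(2) jn by force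
        then have le: "(W *\<^sub>v x) $ j + b $ j \<le> 0" using fp[OF jn] by linarith
        have "W $$ (j,i) * x $ i \<le> (\<Sum>k<n. W $$ (j,k) * x $ k)"
          by (rule member_le_sum) (use termnn[OF jU jn] in' in auto)
        moreover have "W $$ (j,i) * x $ i > 0" using Wji sig i(1) by simp
        ultimately have "(W *\<^sub>v x) $ j > 0" using Wxi[OF x(1) jn] by linarith
        then show False using le b(2) jn by force
      qed
    qed
    moreover have "spec_rad B < 1"
    proof -
      define y where "y = vec m (\<lambda>a. x $ pick \<tau> a)"
      have y: "y \<in> carrier_vec m" by (simp add: y_def)
      have ypos: "y $ a > 0" if "a < m" for a
        using that pk[OF that] tsig sig by (auto simp: y_def)
      have "(B *\<^sub>v y) $ a \<le> y $ a" if a: "a < m" for a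
      proof -
        let ?j = "pick \<tau> a"
        have jU: "?j \<in> U" using pk[OF a] tU by blast
        have jn: "?j < n" by (rule pkn[OF a])
        have "(B *\<^sub>v y) $ a = (\<Sum>b<m. B $$ (a,b) * y $ b)" by (rule mv_index[OF Bc y a])
        also have "\<dots> = (\<Sum>b<m. W $$ (?j, pick \<tau> b) * x $ pick \<tau> b)"
          by (intro sum.cong) (simp_all add: Bij a y_def)
        also have "\<dots> = (\<Sum>k\<in>\<tau>. W $$ (?j, k) * x $ k)"
          unfolding m_def by (rule sum_pick[OF fin])
        also have "\<dots> \<le> (\<Sum>k<n. W $$ (?j, k) * x $ k)"
          by (rule sum_mono2) (use tn termnn[OF jU jn] in auto)
        also have "\<dots> = (W *\<^sub>v x) $ ?j" using Wxi[OF x(1) jn] by simp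
        also have "\<dots> \<le> (W *\<^sub>v x) $ ?j + b $ ?j" using b(2) jn by simp
        also have "\<dots> = x $ ?j"
        proof -
          have "x $ ?j > 0" using pk[OF a] tsig sig by blast
          then show ?thesis using fp[OF jn] by (simp add: max_def split: if_splits)
        qed
        also have "\<dots> = y $ a" using a by (simp add: y_def)
        finally show ?thesis .
      qed
      then show ?thesis by (intro L1[OF Bc nnB y ypos _ nofix]) auto
    qed
    ultimately show "spec_rad B < 1 \<and> out_nbhd (exc_graph W E) E \<sigma> \<inter> U \<subseteq> \<sigma>" by blast
  next
    assume "spec_rad B < 1 \<and> out_nbhd (exc_graph W E) E \<sigma> \<inter> U \<subseteq> \<sigma>"
    then have sr: "spec_rad B < 1" and gr: "out_nbhd (exc_graph W E) E \<sigma> \<inter> U \<subseteq> \<sigma>" by auto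
    define af where "af a = 1 + (\<Sum>l\<in>\<sigma> - \<tau>. W $$ (pick \<tau> a, l))" for a
    have afp: "af a > 0" if a: "a < m" for a
    proof -
      have "(\<Sum>l\<in>\<sigma> - \<tau>. W $$ (pick \<tau> a, l)) \<ge> 0"
        by (intro sum_nonneg) (use Ecol sigE pkn[OF a] in blast)
      then show ?thesis by (simp add: af_def)
    qed
    have "\<exists>Lf. \<forall>i<m. Lf i > 0 \<and> Lf i = af i + (\<Sum>j<m. B $$ (i,j) * Lf j)"
    proof (rule L2[OF Bc])
      show "\<And>i j. i < m \<Longrightarrow> j < m \<Longrightarrow> 0 \<le> B $$ (i, j)" by (rule nnB)
      show "spec_rad B < 1" by (rule sr)
      show "0 < m \<Longrightarrow> det (1\<^sub>m m - B) \<noteq> 0" by (rule dt)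
      show "\<And>i. i < m \<Longrightarrow> 0 < af i" by (rule afp)
    qed
    then obtain Lf where Lf: "\<And>a. a < m \<Longrightarrow> Lf a > 0"
      "\<And>a. a < m \<Longrightarrow> Lf a = af a + (\<Sum>b<m. B $$ (a,b) * Lf b)"
      by blast
    define idx where "idx k = card {z\<in>\<tau>. z < k}" for k
    have idx: "idx k < m" "pick \<tau> (idx k) = k" if "k \<in> \<tau>" for k
      using idx_lt[OF fin that] pick_card_in_set[OF that] unfolding idx_def m_def by auto
    have idxp: "idx (pick \<tau> b) = b" if "b < m" for b
      unfolding idx_def using card_pick[where n=b and S=\<tau>] that m_def by simp
    define xs where "xs k = (if k \<in> \<tau> then Lf (idx k) else if k \<in> \<sigma> then 1 else 0)" for k
    have xsnn: "xs k \<ge> 0" for k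
      using Lf(1)[OF idx(1)] unfolding xs_def by (auto intro: less_imp_le)
    have xspos: "xs k > 0 \<longleftrightarrow> k \<in> \<sigma>" for k
      using Lf(1)[OF idx(1)] tsig unfolding xs_def by auto
    define S where "S j = (\<Sum>k<n. W $$ (j,k) * xs k)" for j
    define t where "t = 1 + (\<Sum>j<n. \<bar>S j\<bar>) +
       (\<Sum>j<n. \<Sum>i<n. (if W $$ (j,i) < 0 then \<bar>S j\<bar> / (- W $$ (j,i)) else 0))"
    have t3: "(\<Sum>j<n. \<Sum>i<n. (if W $$ (j,i) < 0 then \<bar>S j\<bar> / (- W $$ (j,i)) else 0)) \<ge> 0"
      by (intro sum_nonneg) (auto simp: divide_nonneg_neg)
    have t2: "\<bar>S j\<bar> \<le> (\<Sum>j<n. \<bar>S j\<bar>)" if "j < n" for j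
      by (rule member_le_sum) (use that in auto)
    have tS: "\<bar>S j\<bar> \<le> t" if "j < n" for j using t2[OF that] t3 unfolding t_def by linarith
    have tpos: "t > 0"
    proof -
      have "(\<Sum>j<n. \<bar>S j\<bar>) \<ge> 0" by (rule sum_nonneg) simp
      then show ?thesis using t3 unfolding t_def by linarith
    qed
    have tinh: "\<bar>S j\<bar> / (- W $$ (j,i)) \<le> t" if "j < n" "i < n" "W $$ (j,i) < 0" for i j
    proof -
      have "\<bar>S j\<bar> / (- W $$ (j,i)) = (if W $$ (j,i) < 0 then \<bar>S j\<bar> / (- W $$ (j,i)) else 0)"
        using that by simp
      also have "\<dots> \<le> (\<Sum>i<n. (if W $$ (j,i) < 0 then \<bar>S j\<bar> / (- W $$ (j,i)) else 0))"
        by (rule member_le_sum) (use that in \<open>auto simp: divide_nonneg_neg\<close>)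
      also have "\<dots> \<le> (\<Sum>j<n. \<Sum>i<n. (if W $$ (j,i) < 0 then \<bar>S j\<bar> / (- W $$ (j,i)) else 0))"
        by (rule member_le_sum[where f="\<lambda>j. \<Sum>i<n. (if W $$ (j,i) < 0 then \<bar>S j\<bar> / (- W $$ (j,i)) else 0)"])
          (use that in \<open>auto intro!: sum_nonneg simp: divide_nonneg_neg\<close>)
      finally have "\<bar>S j\<bar> / (- W $$ (j,i)) \<le> (\<Sum>j<n. \<Sum>i<n. (if W $$ (j,i) < 0 then \<bar>S j\<bar> / (- W $$ (j,i)) else 0))" .
      moreover have "(\<Sum>j<n. \<bar>S j\<bar>) \<ge> 0" by (rule sum_nonneg) simp
      ultimately show ?thesis unfolding t_def by linarith
    qed
    define x where "x = vec n (\<lambda>k. xs k + (if k \<in> I then t else 0))"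
    have x: "x \<in> carrier_vec n" by (simp add: x_def)
    have xk: "x $ k = xs k + (if k \<in> I then t else 0)" if "k < n" for k
      using that by (simp add: x_def)
    have xnn: "x $ k \<ge> 0" if "k < n" for k using xk[OF that] xsnn tpos by simp
    have In: "I \<subseteq> {..<n}" using EIn by blast
    have Wx: "(W *\<^sub>v x) $ j = S j + t * (\<Sum>i\<in>I. W $$ (j,i))" if j: "j < n" for j
    proof -
      have "(W *\<^sub>v x) $ j = (\<Sum>k<n. W $$ (j,k) * x $ k)" by (rule Wxi[OF x j])
      also have "\<dots> = (\<Sum>k<n. W $$ (j,k) * xs k + (if k \<in> I then W $$ (j,k) * t else 0))"
        by (intro sum.cong) (simp_all add: xk distrib_left)
      also have "\<dots> = S j + (\<Sum>k<n. (if k \<in> I then W $$ (j,k) * t else 0))"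
        unfolding S_def by (rule sum.distrib)
      also have "(\<Sum>k<n. (if k \<in> I then W $$ (j,k) * t else 0)) = (\<Sum>k\<in>{..<n} \<inter> I. W $$ (j,k) * t)"
        by (rule sum.inter_restrict[symmetric]) simp
      also have "{..<n} \<inter> I = I" using In by blast
      finally show ?thesis by (simp add: sum_distrib_left mult.commute)
    qed
    have Inh: "(\<Sum>i\<in>I. W $$ (j,i)) \<le> 0" if "j < n" for j
      by (rule sum_nonpos) (use Icol that in blast)
    have Inh0: "(\<Sum>i\<in>I. W $$ (j,i)) = 0" if "j \<in> U" for j
      by (rule sum.neutral) (use that Uiff in blast)
    have ok: "(x $ j > 0 \<longrightarrow> (W *\<^sub>v x) $ j \<le> x $ j) \<and> (\<not> x $ j > 0 \<longrightarrow> (W *\<^sub>v x) $ j \<le> 0)"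
      if j: "j < n" for j
    proof -
      have "j \<in> I \<or> (j \<in> E \<and> j \<notin> U) \<or> (j \<in> U \<and> j \<in> \<sigma>) \<or> (j \<in> U \<and> j \<notin> \<sigma>)"
        using j EIn Uiff by blast
      then show ?thesis
      proof (elim disjE conjE)
        assume jI: "j \<in> I"
        then have "j \<notin> \<sigma>" using sigE EI(2) by blast
        then have "xs j = 0" using tsig unfolding xs_def by auto
        then have xj: "x $ j = t" using xk[OF j] jI by simp
        have "(W *\<^sub>v x) $ j \<le> S j" using Wx[OF j] Inh[OF j] tpos
          by (simp add: mult_nonneg_nonpos)
        also have "\<dots> \<le> t" using tS[OF j] by linarith
        finally show ?thesis using xj tpos by simp
      next
        assume jE: "j \<in> E" and jU: "j \<notin> U"
        then obtain i where i: "i \<in> I" "W $$ (j,i) \<noteq> 0" using Uiff by blast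
        have Wji: "W $$ (j,i) < 0" using Icol[OF i(1) j] i(2) by linarith
        have iin: "i < n" using i(1) In by blast
        have "(\<Sum>i\<in>I. W $$ (j,i)) = W $$ (j,i) + (\<Sum>i\<in>I - {i}. W $$ (j,i))"
          by (rule sum.remove) (use i(1) In finite_subset in auto)
        moreover have "(\<Sum>i\<in>I - {i}. W $$ (j,i)) \<le> 0"
          by (rule sum_nonpos) (use Icol j in blast)
        ultimately have inh: "(\<Sum>i\<in>I. W $$ (j,i)) \<le> W $$ (j,i)" by linarith
        have "\<bar>S j\<bar> / (- W $$ (j,i)) \<le> t" by (rule tinh[OF j iin Wji])
        moreover have d: "0 < - W $$ (j,i)" using Wji by simp
        ultimately have tw: "\<bar>S j\<bar> \<le> t * (- W $$ (j,i))" using pos_divide_le_eq[OF d] by blast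
        have "t * (\<Sum>i\<in>I. W $$ (j,i)) \<le> t * W $$ (j,i)" using inh tpos by simp
        then have "(W *\<^sub>v x) $ j \<le> 0" using Wx[OF j] tw by linarith
        then show ?thesis using xnn[OF j] by linarith
      next
        assume jU: "j \<in> U" and js: "j \<in> \<sigma>"
        have jt: "j \<in> \<tau>" using jU js unfolding \<tau>_def by blast
        have jI: "j \<notin> I" using js sigE EI(2) by blast
        have xj: "x $ j = Lf (idx j)" using xk[OF j] jI jt unfolding xs_def by simp
        have xs_split: "W $$ (j,k) * xs k = (if k \<in> \<tau> then W $$ (j,k) * Lf (idx k) else 0)
                 + (if k \<in> \<sigma> - \<tau> then W $$ (j,k) else 0)" for k
          unfolding xs_def by auto
        have "S j = (\<Sum>k<n. (if k \<in> \<tau> then W $$ (j,k) * Lf (idx k) else 0))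
                 + (\<Sum>k<n. (if k \<in> \<sigma> - \<tau> then W $$ (j,k) else 0))"
          unfolding S_def xs_split by (rule sum.distrib)
        also have "(\<Sum>k<n. (if k \<in> \<tau> then W $$ (j,k) * Lf (idx k) else 0)) = (\<Sum>k\<in>{..<n} \<inter> \<tau>. W $$ (j,k) * Lf (idx k))"
          by (rule sum.inter_restrict[symmetric]) simp
        also have "{..<n} \<inter> \<tau> = \<tau>" using tn by blast
        also have "(\<Sum>k<n. (if k \<in> \<sigma> - \<tau> then W $$ (j,k) else 0)) = (\<Sum>k\<in>{..<n} \<inter> (\<sigma> - \<tau>). W $$ (j,k))"
          by (rule sum.inter_restrict[symmetric]) simp
        also have "{..<n} \<inter> (\<sigma> - \<tau>) = \<sigma> - \<tau>" using sign by blast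
        also have "(\<Sum>k\<in>\<tau>. W $$ (j,k) * Lf (idx k)) = (\<Sum>b<m. W $$ (j, pick \<tau> b) * Lf (idx (pick \<tau> b)))"
          unfolding m_def by (rule sum_pick[OF fin, symmetric])
        also have "\<dots> = (\<Sum>b<m. B $$ (idx j, b) * Lf b)"
          by (intro sum.cong) (simp_all add: idxp Bij idx[OF jt])
        finally have "S j = (\<Sum>b<m. B $$ (idx j, b) * Lf b) + (\<Sum>k\<in>\<sigma> - \<tau>. W $$ (j,k))" .
        moreover have "Lf (idx j) = af (idx j) + (\<Sum>b<m. B $$ (idx j,b) * Lf b)"
          by (rule Lf(2)[OF idx(1)[OF jt]])
        moreover have "af (idx j) = 1 + (\<Sum>l\<in>\<sigma> - \<tau>. W $$ (j, l))"
          unfolding af_def idx(2)[OF jt] ..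
        ultimately have "S j = Lf (idx j) - 1" by linarith
        then have "(W *\<^sub>v x) $ j = x $ j - 1" using Wx[OF j] Inh0[OF jU] xj by simp
        then show ?thesis using xnn[OF j] by linarith
      next
        assume jU: "j \<in> U" and js: "j \<notin> \<sigma>"
        have jE: "j \<in> E" using jU Uiff by blast
        have jI: "j \<notin> I" using jE EI(2) by blast
        have xj: "x $ j = 0" using xk[OF j] jI js tsig unfolding xs_def by auto
        have "S j = 0" unfolding S_def
        proof (rule sum.neutral, rule ballI)
          fix k assume k: "k \<in> {..<n}"
          show "W $$ (j,k) * xs k = 0"
          proof (cases "k \<in> \<sigma>")
            case False then have "xs k = 0" using tsig unfolding xs_def by auto
            then show ?thesis by simp
          next
            case True
            have kE: "k \<in> E" using True sigE by blast
            have "W $$ (j,k) \<ge> 0" using Ecol[OF kE j] .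
            moreover have "\<not> W $$ (j,k) > 0"
            proof
              assume "W $$ (j,k) > 0"
              then have "exc_graph W E k j" unfolding exc_graph_def using kE jE True js by auto
              then have "j \<in> out_nbhd (exc_graph W E) E \<sigma>" unfolding out_nbhd_def using True jE by blast
              then show False using gr jU js by blast
            qed
            ultimately show ?thesis by simp
          qed
        qed
        then have "(W *\<^sub>v x) $ j = 0" using Wx[OF j] Inh0[OF jU] by simp
        then show ?thesis using xj by simp
      qed
    qed
    define b where "b = vec n (\<lambda>j. if x $ j > 0 then x $ j - (W *\<^sub>v x) $ j else 0)"
    have bc: "b \<in> carrier_vec n" by (simp add: b_def)
    have bnn: "\<forall>i<n. b $ i \<ge> 0" using ok by (simp add: b_def)
    have fpx: "tln_fixed_point n W b x"
      unfolding tln_fixed_point_def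
    proof (intro conjI allI impI)
      show "x \<in> carrier_vec n" by (rule x)
      fix i assume i: "i < n"
      show "x $ i = max 0 ((W *\<^sub>v x) $ i + b $ i)"
      proof (cases "x $ i > 0")
        case True then show ?thesis using i by (simp add: b_def)
      next
        case False
        then have "x $ i = 0" using xnn[OF i] by simp
        then show ?thesis using ok[OF i] i False by (simp add: b_def)
      qed
    qed
    have supp: "\<sigma> = exc_support E x"
    proof -
      have "i \<in> \<sigma> \<longleftrightarrow> i \<in> E \<and> x $ i > 0" for i
      proof (cases "i \<in> E")
        case True
        then have "i < n" "i \<notin> I" using EIn EI(2) by auto
        then have "x $ i = xs i" using xk by simp
        then show ?thesis using xspos True by simp
      next
        case False then show ?thesis using sigE by blast
      qed
      then show ?thesis unfolding exc_support_def by blast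
    qed
    show "\<sigma> \<in> comb_code n W E"
      unfolding comb_code_def using supp bc bnn x xnn fpx by blast
  qed
qed

end
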